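(* Let $D\subset\mathbb R^3$ be an open set containing the $x_2$-axis and $E=D\cap\{x: x_1^2+x_3^2<1\}$. If $0<b<1$ and $0<a<1$, then there is a constant $C>0$ such that for every $u$ with $\|u\|^{(b,\star)}_{0,a;E}<\infty$, $$|u|^{(b)}_{a;E}\le C\,\|u\|^{(b,\star)}_{0,a;E}.$$
   Context: $r_x=\sqrt{x_1^2+x_3^2}$, $r_{x,y}=\min(r_x,r_y)$. $\|u\|^{(b,\star)}_{0,a;E}=\sup_{x\in E}r_x^{\max(b,0)}|u(x)|+\sup_{x\ne y\in E}r_{x,y}^{\max(b+a,0)}\frac{|u(x)-u(y)|}{|x-y|^a}$. For $\sigma>0$ let $E_\sigma=\{x\in E: r_x>\sigma\}$, $\|u\|_{a;E_\sigma}=\sup_{E_\sigma}|u|+\sup_{x\ne y\in E_\sigma}\frac{|u(x)-u(y)|}{|x-y|^a}$, and $|u|^{(b)}_{a;E}=\sup_{\sigma>0}\sigma^{a+b}\|u\|_{a;E_\sigma}$. *)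

theory Defs
  imports "HOL-Analysis.Analysis"
begin

definition rx :: "real^3 \<Rightarrow> real" where
  "rx x = sqrt ((x$1)^2 + (x$3)^2)"

text \<open>Power t^e for t \<ge> 0, with the convention t^0 = 1 (also for t = 0).\<close>
definition wpow :: "real \<Rightarrow> real \<Rightarrow> real" where
  "wpow t e = (if e = 0 then 1 else t powr e)"

text \<open>Norms take values in [0,\<infinity>] (ennreal); a supremum over the empty set is 0.\<close>
definition star_norm :: "real \<Rightarrow> real \<Rightarrow> (real^3) set \<Rightarrow> (real^3 \<Rightarrow> real) \<Rightarrow> ennreal" where
  "star_norm b a E u =
     (SUP x\<in>E. ennreal (wpow (rx x) (max b 0) * \<bar>u x\<bar>))
   + (SUP x\<in>E. SUP y\<in>E - {x}.
        ennreal (wpow (min (rx x) (rx y)) (max (b + a) 0) * \<bar>u x - u y\<bar> / dist x y powr a))"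

definition holder_norm :: "real \<Rightarrow> (real^3) set \<Rightarrow> (real^3 \<Rightarrow> real) \<Rightarrow> ennreal" where
  "holder_norm a S u =
     (SUP x\<in>S. ennreal \<bar>u x\<bar>)
   + (SUP x\<in>S. SUP y\<in>S - {x}. ennreal (\<bar>u x - u y\<bar> / dist x y powr a))"

definition E_sigma :: "(real^3) set \<Rightarrow> real \<Rightarrow> (real^3) set" where
  "E_sigma E \<sigma> = {x \<in> E. rx x > \<sigma>}"

definition weighted_norm :: "real \<Rightarrow> real \<Rightarrow> (real^3) set \<Rightarrow> (real^3 \<Rightarrow> real) \<Rightarrow> ennreal" where
  "weighted_norm b a E u =
     (SUP \<sigma>\<in>{0<..}. ennreal (\<sigma> powr (a + b)) * holder_norm a (E_sigma E \<sigma>) u)"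

end

theory Submission
  imports Defs
begin

theorem lemma2p2:
  fixes D :: "(real^3) set" and a b :: real
  assumes "open D"
    and "{x :: real^3. x$1 = 0 \<and> x$3 = 0} \<subseteq> D"
    and "0 < b" "b < 1" "0 < a" "a < 1"
  shows "\<exists>C>0. \<forall>u :: real^3 \<Rightarrow> real.
           star_norm b a (D \<inter> {x. (x$1)^2 + (x$3)^2 < 1}) u < \<infinity> \<longrightarrow>
           weighted_norm b a (D \<inter> {x. (x$1)^2 + (x$3)^2 < 1}) u
             \<le> ennreal C * star_norm b a (D \<inter> {x. (x$1)^2 + (x$3)^2 < 1}) u"
proof (intro exI[of _ 1] conjI allI impI)
  fix u :: "real^3 \<Rightarrow> real"
  define E where "E = D \<inter> {x::real^3. (x$1)^2 + (x$3)^2 < 1}"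
  have rxE: "rx x < 1" if "x \<in> E" for x
    using that unfolding E_def rx_def by (auto simp: real_sqrt_less_iff)
  have rx0: "0 \<le> rx x" for x unfolding rx_def by simp
  have wb: "wpow t (max b 0) = t powr b" for t using assms by (simp add: wpow_def)
  have wab: "wpow t (max (b + a) 0) = t powr (b + a)" for t using assms by (simp add: wpow_def)
  have "weighted_norm b a E u \<le> star_norm b a E u"
    unfolding weighted_norm_def
  proof (rule SUP_least)
    fix \<sigma> :: real assume "\<sigma> \<in> {0<..}"
    hence s0: "0 < \<sigma>" by simp
    show "ennreal (\<sigma> powr (a + b)) * holder_norm a (E_sigma E \<sigma>) u \<le> star_norm b a E u"
    proof (cases "E_sigma E \<sigma> = {}")
      case True thus ?thesis by (simp add: holder_norm_def bot_ennreal)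
    next
      case False
      then obtain z where "z \<in> E_sigma E \<sigma>" by auto
      hence s1: "\<sigma> < 1" using rxE unfolding E_sigma_def by force
      let ?c = "ennreal (\<sigma> powr (a + b))"
      have A: "?c * (SUP x\<in>E_sigma E \<sigma>. ennreal \<bar>u x\<bar>)
          \<le> (SUP x\<in>E. ennreal (wpow (rx x) (max b 0) * \<bar>u x\<bar>))"
        unfolding SUP_mult_left_ennreal
      proof (rule SUP_least)
        fix x assume x: "x \<in> E_sigma E \<sigma>"
        hence xE: "x \<in> E" and xs: "\<sigma> < rx x" unfolding E_sigma_def by auto
        have "\<sigma> powr (a + b) \<le> \<sigma> powr b"
          using s0 s1 assms by (intro powr_mono') auto
        also have "\<dots> \<le> rx x powr b" using s0 xs assms by (intro powr_mono2) auto
        finally have "\<sigma> powr (a + b) * \<bar>u x\<bar> \<le> rx x powr b * \<bar>u x\<bar>"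
          by (intro mult_right_mono) auto
        hence "?c * ennreal \<bar>u x\<bar> \<le> ennreal (wpow (rx x) (max b 0) * \<bar>u x\<bar>)"
          by (simp add: wb ennreal_mult'' ennreal_leI flip: ennreal_mult'')
        thus "?c * ennreal \<bar>u x\<bar> \<le> (SUP x\<in>E. ennreal (wpow (rx x) (max b 0) * \<bar>u x\<bar>))"
          using xE by (intro SUP_upper2) auto
      qed
      have B: "?c * (SUP x\<in>E_sigma E \<sigma>. SUP y\<in>E_sigma E \<sigma> - {x}. ennreal (\<bar>u x - u y\<bar> / dist x y powr a))
          \<le> (SUP x\<in>E. SUP y\<in>E - {x}.
        ennreal (wpow (min (rx x) (rx y)) (max (b + a) 0) * \<bar>u x - u y\<bar> / dist x y powr a))"
        unfolding SUP_mult_left_ennreal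
      proof (rule SUP_least)
        fix x assume x: "x \<in> E_sigma E \<sigma>"
        hence xE: "x \<in> E" and xs: "\<sigma> < rx x" unfolding E_sigma_def by auto
        show "(SUP y\<in>E_sigma E \<sigma> - {x}. ?c * ennreal (\<bar>u x - u y\<bar> / dist x y powr a))
          \<le> (SUP x\<in>E. SUP y\<in>E - {x}.
        ennreal (wpow (min (rx x) (rx y)) (max (b + a) 0) * \<bar>u x - u y\<bar> / dist x y powr a))"
        proof (rule SUP_least)
          fix y assume y: "y \<in> E_sigma E \<sigma> - {x}"
          hence yE: "y \<in> E - {x}" and ys: "\<sigma> < rx y" unfolding E_sigma_def by auto
          have "\<sigma> powr (a + b) \<le> min (rx x) (rx y) powr (b + a)"
            using s0 xs ys assms by (subst add.commute, intro powr_mono2) auto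
          hence "\<sigma> powr (a + b) * (\<bar>u x - u y\<bar> / dist x y powr a)
             \<le> min (rx x) (rx y) powr (b + a) * (\<bar>u x - u y\<bar> / dist x y powr a)"
            by (intro mult_right_mono) auto
          hence "?c * ennreal (\<bar>u x - u y\<bar> / dist x y powr a)
             \<le> ennreal (wpow (min (rx x) (rx y)) (max (b + a) 0) * \<bar>u x - u y\<bar> / dist x y powr a)"
            by (simp add: wab ennreal_leI flip: ennreal_mult'')
          thus "?c * ennreal (\<bar>u x - u y\<bar> / dist x y powr a) \<le> (SUP x\<in>E. SUP y\<in>E - {x}.
             ennreal (wpow (min (rx x) (rx y)) (max (b + a) 0) * \<bar>u x - u y\<bar> / dist x y powr a))"
            using xE yE by (intro SUP_upper2[OF xE] SUP_upper2[OF yE]) auto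
        qed
      qed
      show ?thesis unfolding holder_norm_def star_norm_def distrib_left
        by (intro add_mono A B)
    qed
  qed
  thus "weighted_norm b a (D \<inter> {x. (x$1)^2 + (x$3)^2 < 1}) u
             \<le> ennreal 1 * star_norm b a (D \<inter> {x. (x$1)^2 + (x$3)^2 < 1}) u"
    by (simp add: E_def)
qed simp

end
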